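(* For every $n\ge 1$ and every $w \in S_n$, $\operatorname{dep}(w) = \operatorname{ar}(\phi(w))$.
   Context: For $w\in S_n$, the depth is $\operatorname{dep}(w)=\sum_{i:\,w(i)>i}(w(i)-i)$, i.e. half the total displacement $\sum_{i=1}^n |w(i)-i|$. A Motzkin path of length $n$ is a word $p_1\cdots p_n$ in the letters $U,D,H$ such that the subword formed by the letters $U$ and $D$ is a balanced parenthesization; it is drawn as a lattice path from $(0,0)$ to $(n,0)$ with $U$ a step $(1,1)$, $D$ a step $(1,-1)$, $H$ a step $(1,0)$, never going below height $0$. Its area $\operatorname{ar}(p)$ is the area of the region between the line $y=0$ and the path. The map $\phi\colon S_n\to\{\text{Motzkin paths of length } n\}$ is defined by $\phi(w)=p_1\cdots p_n$ where $p_i=U$ if $w^{-1}(i)>i<w(i)$, $p_i=D$ if $w^{-1}(i)<i>w(i)$, and $p_i=H$ otherwise. *)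

theory Defs
  imports "HOL-Combinatorics.Permutations" Complex_Main
begin

text \<open>Permutations of S_n are functions w :: nat => nat with w permutes {1..n}.\<close>

definition dep :: "nat \<Rightarrow> (nat \<Rightarrow> nat) \<Rightarrow> nat" where
  "dep n w = (\<Sum>i\<in>{i\<in>{1..n}. w i > i}. w i - i)"

datatype step = U | D | H

text \<open>Motzkin words are lists of steps; the i-th letter (1-based) is position i-1.\<close>

definition phi :: "nat \<Rightarrow> (nat \<Rightarrow> nat) \<Rightarrow> step list" where
  "phi n w = map (\<lambda>i. if inv w i > i \<and> i < w i then U
                     else if inv w i < i \<and> i > w i then D
                     else H) [1..<n+1]"

definition step_val :: "step \<Rightarrow> int" where
  "step_val s = (case s of U \<Rightarrow> 1 | D \<Rightarrow> -1 | H \<Rightarrow> 0)"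

definition height :: "step list \<Rightarrow> nat \<Rightarrow> int" where
  "height p k = sum_list (map step_val (take k p))"

definition motzkin :: "step list \<Rightarrow> bool" where
  "motzkin p \<longleftrightarrow> height p (length p) = 0 \<and> (\<forall>k\<le>length p. height p k \<ge> 0)"

definition ar :: "step list \<Rightarrow> real" where
  "ar p = (\<Sum>k=1..length p. (of_int (height p (k-1)) + of_int (height p k)) / 2)"

end

theory Submission
  imports Defs
begin

lemma height_Suc: "k < length p \<Longrightarrow> height p (Suc k) = height p k + step_val (p ! k)"
  by (simp add: height_def take_Suc_conv_app_nth)

lemma height_0: "height p 0 = 0" by (simp add: height_def)

context
  fixes n :: nat and w :: "nat \<Rightarrow> nat"
  assumes perm: "w permutes {1..n}"
begin

definition cc :: "nat \<Rightarrow> int" where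
  "cc k = (\<Sum>i\<in>{1..n}. if i \<le> k \<and> k < w i then 1 else 0)"

lemma winv: "w (inv w j) = j" "inv w (w j) = j"
  using perm permutes_inverses by metis+

lemma wmem: "i \<in> {1..n} \<Longrightarrow> w i \<in> {1..n}" "j \<in> {1..n} \<Longrightarrow> inv w j \<in> {1..n}"
  using perm permutes_in_image permutes_inv by (metis, metis permutes_in_image)

lemma wout: "i \<notin> {1..n} \<Longrightarrow> w i = i"
  using perm permutes_not_in by metis

lemma stepv: assumes "k < n"
  shows "step_val (phi n w ! k) = (if Suc k < w (Suc k) then 1 else 0) - (if inv w (Suc k) < Suc k then 1 else 0)"
proof -
  have e: "phi n w ! k = (if inv w (Suc k) > Suc k \<and> Suc k < w (Suc k) then U
                     else if inv w (Suc k) < Suc k \<and> Suc k > w (Suc k) then D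
                     else H)"
    using assms unfolding phi_def by (simp del: upt_Suc add: nth_map_upt)
  have a: "w (Suc k) = Suc k \<longleftrightarrow> inv w (Suc k) = Suc k" using winv by metis
  show ?thesis unfolding e step_val_def using a by (auto split: if_splits)
qed

lemma cc_Suc: assumes "k < n"
  shows "cc (Suc k) = cc k + (if Suc k < w (Suc k) then 1 else 0) - (if inv w (Suc k) < Suc k then 1 else 0)"
proof -
  have pt: "\<And>i. i \<in> {1..n} \<Longrightarrow> (if i \<le> Suc k \<and> Suc k < w i then 1 else 0) - (if i \<le> k \<and> k < w i then 1 else 0)
      = (if i = Suc k then (if Suc k < w (Suc k) then 1 else 0::int) else 0) - (if i = inv w (Suc k) then (if inv w (Suc k) \<le> k then 1 else 0) else 0)"
  proof -
    fix i assume "i \<in> {1..n}"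
    have "w i = Suc k \<longleftrightarrow> i = inv w (Suc k)" using winv by metis
    then show "?thesis i" by auto
  qed
  have "cc (Suc k) - cc k = (\<Sum>i\<in>{1..n}. (if i \<le> Suc k \<and> Suc k < w i then 1 else 0) - (if i \<le> k \<and> k < w i then 1 else 0))"
    unfolding cc_def by (simp add: sum_subtractf)
  also have "\<dots> = (\<Sum>i\<in>{1..n}. (if i = Suc k then (if Suc k < w (Suc k) then 1 else 0::int) else 0) - (if i = inv w (Suc k) then (if inv w (Suc k) \<le> k then 1 else 0) else 0))"
    using pt by (rule sum.cong[OF refl])
  also have "\<dots> = (if Suc k < w (Suc k) then 1 else 0) - (if inv w (Suc k) \<le> k then 1 else 0)"
    using assms wmem(2)[of "Suc k"] by (simp add: sum_subtractf sum.delta')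
  finally show ?thesis by auto
qed

lemma height_cc: "k \<le> n \<Longrightarrow> height (phi n w) k = cc k"
proof (induction k)
  case 0 then show ?case by (simp add: height_0 cc_def)
next
  case (Suc k)
  then have "k < n" by simp
  then show ?case using Suc height_Suc[of k "phi n w"] stepv cc_Suc by (simp add: phi_def)
qed

lemma cc_n: "cc n = 0"
  unfolding cc_def using wmem(1) by (intro sum.neutral) fastforce

lemma sum_cc: "(\<Sum>k=1..n. cc k) = int (dep n w)"
proof -
  have "(\<Sum>k=1..n. cc k) = (\<Sum>i\<in>{1..n}. \<Sum>k\<in>{1..n}. if i \<le> k \<and> k < w i then 1 else 0 :: int)"
    unfolding cc_def by (rule sum.swap)
  also have "\<dots> = (\<Sum>i\<in>{1..n}. int (w i - i))"
  proof (rule sum.cong[OF refl])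
    fix i assume i: "i \<in> {1..n}"
    have "{k\<in>{1..n}. i \<le> k \<and> k < w i} = {i..<w i}" using i wmem(1)[OF i] by auto
    then have "card ({1..n} \<inter> {k. i \<le> k \<and> k < w i}) = w i - i" by (simp add: Int_def)
    then show "(\<Sum>k\<in>{1..n}. if i \<le> k \<and> k < w i then 1 else 0 :: int) = int (w i - i)"
      by (simp add: sum.If_cases)
  qed
  also have "\<dots> = int (\<Sum>i\<in>{1..n}. if w i > i then w i - i else 0)"
    by (simp add: of_nat_sum) (rule sum.cong, auto)
  also have "\<dots> = int (dep n w)" unfolding dep_def
    by (subst sum.inter_filter[symmetric]) auto
  finally show ?thesis .
qed

end

theorem proposition3p2:
  fixes n :: nat and w :: "nat \<Rightarrow> nat"
  assumes "n \<ge> 1" and "w permutes {1..n}"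
  shows "real (dep n w) = ar (phi n w)"
proof -
  note p = assms(2)
  have len: "length (phi n w) = n" by (simp add: phi_def)
  have h: "\<And>k. k \<le> n \<Longrightarrow> height (phi n w) k = cc n w k" using height_cc[OF p] by blast
  have "ar (phi n w) = (\<Sum>k=1..n. (of_int (cc n w (k-1)) + of_int (cc n w k)) / 2)"
    unfolding ar_def len by (rule sum.cong) (auto simp: h)
  also have "\<dots> = ((\<Sum>k=1..n. of_int (cc n w (k-1))) + (\<Sum>k=1..n. of_int (cc n w k))) / 2"
    by (simp add: sum.distrib[symmetric] sum_divide_distrib)
  also have "(\<Sum>k=1..n. of_int (cc n w (k-1)) :: real) = (\<Sum>k=1..n. of_int (cc n w k))"
  proof -
    have "(\<Sum>k=1..n. of_int (cc n w (k-1)) :: real) = (\<Sum>k=0..n-1. of_int (cc n w k))"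
      using assms(1) sum.shift_bounds_cl_nat_ivl[of "\<lambda>k. of_int (cc n w (k-1)) :: real" 0 1 "n-1"] by simp
    also have "\<dots> = (\<Sum>k=0..n. of_int (cc n w k))"
      using assms(1) cc_n[OF p] by (cases n) (auto simp: sum.atLeast0_atMost_Suc)
    also have "\<dots> = (\<Sum>k=1..n. of_int (cc n w k))"
      using cc_def[OF p, of 0] by (simp add: sum.atLeast_Suc_atMost)
    finally show ?thesis .
  qed
  finally have "ar (phi n w) = (\<Sum>k=1..n. of_int (cc n w k))" by simp
  also have "\<dots> = of_int (\<Sum>k=1..n. cc n w k)" by simp
  also have "\<dots> = real (dep n w)" using sum_cc[OF p] by simp
  finally show ?thesis by simp
qed

end
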